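(* Let $V$ be a braided vector space of diagonal type over a field $F$ of characteristic zero with basis $x_1,\dots,x_n$ and braiding $C(x_i\otimes x_j)=p_{i,j}x_j\otimes x_i$, and let $\mathfrak B(V)$ be its Nichols algebra. (i) If there exist $i\ne j$ such that ($p_{i,j}\ne p_{j,i}^2$ or $p_{j,i}\ne p_{i,j}^2$) and $\operatorname{ord}(p_{i,i})\in\{1,\infty\}$, then $\dim\mathfrak L(V)_R=\infty$. (ii) If there exist $i\ne j$ such that ($p_{i,j}\ne1$ or $p_{j,i}\ne1$) and $\operatorname{ord}(p_{i,i})\in\{1,\infty\}$, then $\dim\mathfrak L(V)_L=\infty$.
   Context: $\mathfrak B(V)=T(V)/\bigoplus_{m\ge2}\ker S_m$, $\mathbb Z^n$-graded with $\deg x_i=e_i$; $p_{u,v}=\prod p_{i,j}^{a_ib_j}$ for $\deg u=\sum a_ie_i,\deg v=\sum b_je_j$. $\mathfrak L(V)_L$ (resp. $\mathfrak L(V)_R$) is the Lie subalgebra of $\mathfrak B(V)$ generated by $V$ under $[u,v]_L=p_{v,u}uv-p_{u,v}vu$ (resp. $[u,v]_R=p_{u,v}uv-p_{v,u}vu$). $\operatorname{ord}(q)$ is the multiplicative order of $q$ ($\infty$ if not a root of unity; $\operatorname{ord}(1)=1$). *)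

theory Defs
  imports Main "HOL-Combinatorics.Permutations" "HOL-Library.Extended_Nat" "HOL-Library.Function_Algebras"
begin

(* Tensor algebra T(V), V with basis x_0..x_{n-1}: finitely supported functions on words *)
type_synonym 'a tens = "nat list \<Rightarrow> 'a"

definition tscale :: "'a::times \<Rightarrow> 'a tens \<Rightarrow> 'a tens" where
  "tscale c u = (\<lambda>w. c * u w)"

abbreviation tspan :: "'a::field tens set \<Rightarrow> 'a tens set" where
  "tspan \<equiv> module.span tscale"

definition tensT :: "nat \<Rightarrow> ('a::zero) tens set" where
  "tensT n = {u. finite {w. u w \<noteq> 0} \<and> (\<forall>w. u w \<noteq> 0 \<longrightarrow> set w \<subseteq> {..<n})}"

definition tgen :: "nat \<Rightarrow> ('a::{zero,one}) tens" where
  "tgen i = (\<lambda>w. if w = [i] then 1 else 0)"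

definition tmult :: "('a::comm_semiring_1) tens \<Rightarrow> 'a tens \<Rightarrow> 'a tens" where
  "tmult u v = (\<lambda>w. \<Sum>k\<le>length w. u (take k w) * v (drop k w))"

definition tcomp :: "nat \<Rightarrow> ('a::zero) tens \<Rightarrow> 'a tens" where
  "tcomp m u = (\<lambda>w. if length w = m then u w else 0)"

(* quantum symmetrizer S_m = sum over sigma of T_sigma, for the braiding
   c(x_i \<otimes> x_j) = p i j x_j \<otimes> x_i ; output concentrated in degree m *)
definition qsym :: "(nat \<Rightarrow> nat \<Rightarrow> 'a::comm_ring_1) \<Rightarrow> nat \<Rightarrow> 'a tens \<Rightarrow> 'a tens" where
  "qsym p m u = (\<lambda>v. if length v = m then
      (\<Sum>\<tau> | \<tau> permutes {..<m}.
         (\<Prod>(a,b) \<in> {(a,b). b < a \<and> a < m \<and> \<tau> a < \<tau> b}. p (v ! \<tau> b) (v ! \<tau> a))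
         * u (map (\<lambda>j. v ! \<tau> j) [0..<m]))
      else 0)"

(* the ideal \<Oplus>_{m\<ge>2} ker S_m  (S_0, S_1 are identities) *)
definition nichols_ideal :: "nat \<Rightarrow> (nat \<Rightarrow> nat \<Rightarrow> 'a::comm_ring_1) \<Rightarrow> 'a tens set" where
  "nichols_ideal n p = {u \<in> tensT n. \<forall>m. qsym p m (tcomp m u) = 0}"

(* p_{u,v} for deg u = d, deg v = e (degrees as multiplicity vectors) *)
definition bichar :: "nat \<Rightarrow> (nat \<Rightarrow> nat \<Rightarrow> 'a::comm_monoid_mult) \<Rightarrow> (nat \<Rightarrow> nat) \<Rightarrow> (nat \<Rightarrow> nat) \<Rightarrow> 'a" where
  "bichar n p d e = (\<Prod>i<n. \<Prod>j<n. p i j ^ (d i * e j))"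

definition brL :: "nat \<Rightarrow> (nat \<Rightarrow> nat \<Rightarrow> 'a::comm_ring_1) \<Rightarrow> (nat \<Rightarrow> nat) \<Rightarrow> (nat \<Rightarrow> nat) \<Rightarrow> 'a tens \<Rightarrow> 'a tens \<Rightarrow> 'a tens" where
  "brL n p d e u v = (\<lambda>w. bichar n p e d * tmult u v w - bichar n p d e * tmult v u w)"

definition brR :: "nat \<Rightarrow> (nat \<Rightarrow> nat \<Rightarrow> 'a::comm_ring_1) \<Rightarrow> (nat \<Rightarrow> nat) \<Rightarrow> (nat \<Rightarrow> nat) \<Rightarrow> 'a tens \<Rightarrow> 'a tens \<Rightarrow> 'a tens" where
  "brR n p d e u v = (\<lambda>w. bichar n p d e * tmult u v w - bichar n p e d * tmult v u w)"

inductive_set lie_gen :: "nat \<Rightarrow> ((nat \<Rightarrow> nat) \<Rightarrow> (nat \<Rightarrow> nat) \<Rightarrow> 'a tens \<Rightarrow> 'a tens \<Rightarrow> 'a tens)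
    \<Rightarrow> ('a::{zero,one} tens \<times> (nat \<Rightarrow> nat)) set"
  for n br where
  gen: "i < n \<Longrightarrow> (tgen i, \<lambda>k. if k = i then 1 else 0) \<in> lie_gen n br"
| bra: "(u, d) \<in> lie_gen n br \<Longrightarrow> (v, e) \<in> lie_gen n br \<Longrightarrow>
        (br d e u v, \<lambda>k. d k + e k) \<in> lie_gen n br"

(* Lie subalgebra of B(V) generated by V, lifted to T(V) *)
definition lieL :: "nat \<Rightarrow> (nat \<Rightarrow> nat \<Rightarrow> 'a::field) \<Rightarrow> 'a tens set" where
  "lieL n p = tspan (fst ` lie_gen n (brL n p))"

definition lieR :: "nat \<Rightarrow> (nat \<Rightarrow> nat \<Rightarrow> 'a::field) \<Rightarrow> 'a tens set" where
  "lieR n p = tspan (fst ` lie_gen n (brR n p))"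

(* the image of L \<subseteq> T(V) in B(V) = T(V)/I is infinite-dimensional *)
definition nichols_infdim :: "nat \<Rightarrow> (nat \<Rightarrow> nat \<Rightarrow> 'a::field) \<Rightarrow> 'a tens set \<Rightarrow> bool" where
  "nichols_infdim n p L \<longleftrightarrow>
     \<not> (\<exists>B. finite B \<and> B \<subseteq> tensT n \<and>
          L \<subseteq> {(\<lambda>w. b w + i w) | b i. b \<in> tspan B \<and> i \<in> nichols_ideal n p})"

definition qord :: "'a::monoid_mult \<Rightarrow> enat" where
  "qord q = (if \<exists>k>0. q ^ k = 1 then enat (LEAST k. k > 0 \<and> q ^ k = 1) else \<infinity>)"

end

theory Submission
  imports Defs
begin


lemma tmod: "module (tscale :: 'a::field \<Rightarrow> 'a tens \<Rightarrow> 'a tens)"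
  by unfold_locales (auto simp: tscale_def fun_eq_iff algebra_simps)

lemma span_bounded:
  fixes B :: "'a::field tens set"
  assumes "b \<in> tspan B" "\<And>a w. a \<in> B \<Longrightarrow> N < length w \<Longrightarrow> a w = 0"
  shows "\<forall>w. N < length w \<longrightarrow> b w = 0"
  by (rule module.span_induct_alt[OF tmod assms(1), of "\<lambda>u. \<forall>w. N < length w \<longrightarrow> u w = 0"])
     (use assms(2) in \<open>auto simp: tscale_def\<close>)

lemma qsym_cong:
  assumes "\<And>w. length w = m \<Longrightarrow> f w = g w"
  shows "qsym p m f v = qsym p m g v"
  unfolding qsym_def using assms by (auto intro!: sum.cong)

lemma infdim_crit:
  fixes p :: "nat \<Rightarrow> nat \<Rightarrow> 'a::field"
  assumes "\<And>N. \<exists>u m. u \<in> L \<and> N < m \<and> (\<exists>v. qsym p m u v \<noteq> 0)"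
  shows "nichols_infdim n p L"
  unfolding nichols_infdim_def
proof
  assume "\<exists>B. finite B \<and> B \<subseteq> tensT n \<and> L \<subseteq> {(\<lambda>w. b w + i w) | b i. b \<in> tspan B \<and> i \<in> nichols_ideal n p}"
  then obtain B where B: "finite B" "B \<subseteq> tensT n"
    "L \<subseteq> {(\<lambda>w. b w + i w) | b i. b \<in> tspan B \<and> i \<in> nichols_ideal n p}" by blast
  define S where "S = (\<Union>a\<in>B. {w. a w \<noteq> 0})"
  have "finite S" unfolding S_def using B(1,2) by (auto simp: tensT_def)
  then obtain N where N: "\<And>w. w \<in> S \<Longrightarrow> length w \<le> N"
    using finite_nat_set_iff_bounded_le[of "length ` S"] by auto
  have Bz: "\<And>a w. a \<in> B \<Longrightarrow> N < length w \<Longrightarrow> a w = 0"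
    using N unfolding S_def by force
  obtain u m v where u: "u \<in> L" "N < m" "qsym p m u v \<noteq> 0" using assms by blast
  then obtain b i where bi: "u = (\<lambda>w. b w + i w)" "b \<in> tspan B" "i \<in> nichols_ideal n p"
    using B(3) by blast
  have b0: "\<forall>w. N < length w \<longrightarrow> b w = 0" using span_bounded[of b B N] bi(2) Bz by blast
  have "qsym p m u v = qsym p m (tcomp m i) v"
    by (rule qsym_cong) (use b0 u(2) bi(1) in \<open>auto simp: tcomp_def\<close>)
  also have "\<dots> = 0" using bi(3) by (simp add: nichols_ideal_def)
  finally show False using u(3) by simp
qed



definition ins :: "nat \<Rightarrow> nat \<Rightarrow> (nat\<Rightarrow>nat) \<Rightarrow> nat \<Rightarrow> nat" where
  "ins m r s a = (if a < r then s a else if a = r then m else if a \<le> m then s (a - 1) else a)"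
definition del :: "nat \<Rightarrow> nat \<Rightarrow> (nat\<Rightarrow>nat) \<Rightarrow> nat \<Rightarrow> nat" where
  "del m r s a = (if a < r then s a else if a < m then s (Suc a) else a)"

lemma ins_permutes:
  assumes s: "s permutes {..<m}" and r: "r \<le> m"
  shows "ins m r s permutes {..<Suc m}"
proof (rule bij_imp_permutes)
  have lt: "\<And>a. a < m \<Longrightarrow> s a < m" using permutes_in_image[OF s] by auto
  have inj: "inj s" using s permutes_inj by blast
  have io: "inj_on (ins m r s) {..<Suc m}"
  proof (rule inj_onI)
    fix a b assume a: "a \<in> {..<Suc m}" and b: "b \<in> {..<Suc m}" and e: "ins m r s a = ins m r s b"
    have v: "\<And>c. c \<in> {..<Suc m} \<Longrightarrow> c \<noteq> r \<Longrightarrow> ins m r s c = s (if c < r then c else c - 1) \<and> (if c < r then c else c - 1) < m"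
      using r by (auto simp: ins_def)
    have vr: "ins m r s r = m" by (simp add: ins_def)
    show "a = b"
    proof (cases "a = r")
      case True
      then show ?thesis using v[OF b] e vr lt by (metis less_irrefl)
    next
      case False
      show ?thesis
      proof (cases "b = r")
        case True then show ?thesis using v[OF a False] e vr lt by (metis less_irrefl)
      next
        case bF: False
        have "s (if a < r then a else a - 1) = s (if b < r then b else b - 1)"
          using v[OF a False] v[OF b bF] e by simp
        then have "(if a < r then a else a - 1) = (if b < r then b else b - 1)"
          using inj[unfolded inj_def] by blast
        then show ?thesis using False bF by (auto split: if_splits)
      qed
    qed
  qed
  have im: "ins m r s ` {..<Suc m} \<subseteq> {..<Suc m}"
    unfolding ins_def using r by (auto intro!: less_SucI lt)
  show "bij_betw (ins m r s) {..<Suc m} {..<Suc m}"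
    using io im endo_inj_surj[of "{..<Suc m}" "ins m r s"] by (simp add: bij_betw_def)
  show "\<And>x. x \<notin> {..<Suc m} \<Longrightarrow> ins m r s x = x" using r by (auto simp: ins_def)
qed

lemma del_permutes:
  assumes s: "s permutes {..<Suc m}" and r: "s r = m" "r \<le> m"
  shows "del m r s permutes {..<m}"
proof (rule bij_imp_permutes)
  have inj: "inj s" using s permutes_inj by blast
  have v: "\<And>a. a < m \<Longrightarrow> del m r s a = s (if a < r then a else Suc a) \<and> (if a < r then a else Suc a) < Suc m \<and> (if a < r then a else Suc a) \<noteq> r"
    by (auto simp: del_def)
  have lt: "\<And>a. a < m \<Longrightarrow> del m r s a < m"
  proof -
    fix a assume a: "a < m"
    have "s (if a < r then a else Suc a) \<noteq> m" using v[OF a] r inj[unfolded inj_def] by metis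
    moreover have "s (if a < r then a else Suc a) < Suc m" using v[OF a] permutes_in_image[OF s] by auto
    ultimately show "del m r s a < m" using v[OF a] by simp
  qed
  have io: "inj_on (del m r s) {..<m}"
  proof (rule inj_onI)
    fix a b assume a: "a \<in> {..<m}" and b: "b \<in> {..<m}" and e: "del m r s a = del m r s b"
    then have "(if a < r then a else Suc a) = (if b < r then b else Suc b)"
      using v inj[unfolded inj_def] by auto
    then show "a = b" by (auto split: if_splits)
  qed
  have im: "del m r s ` {..<m} \<subseteq> {..<m}" using lt by auto
  show "bij_betw (del m r s) {..<m} {..<m}"
    using io im endo_inj_surj[of "{..<m}" "del m r s"] by (simp add: bij_betw_def)
  show "\<And>x. x \<notin> {..<m} \<Longrightarrow> del m r s x = x" using r by (auto simp: del_def)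
qed

lemma ins_del:
  assumes s: "s permutes {..<Suc m}" and r: "s r = m" "r \<le> m"
  shows "ins m r (del m r s) = s"
proof
  fix a show "ins m r (del m r s) a = s a"
    using r permutes_not_in[OF s, of a] by (auto simp: ins_def del_def)
qed

lemma del_ins:
  assumes s: "s permutes {..<m}" and r: "r \<le> m"
  shows "del m r (ins m r s) = s"
proof
  fix a show "del m r (ins m r s) a = s a"
    using r permutes_not_in[OF s, of a] by (auto simp: ins_def del_def)
qed

lemma ins_r: "ins m r s r = m" by (simp add: ins_def)

lemma word_ins:
  assumes s: "s permutes {..<m}" and r: "r \<le> m" and l: "length vs = m"
  shows "map (\<lambda>j. (vs @ [x]) ! ins m r s j) [0..<Suc m]
       = take r (map (\<lambda>j. vs ! s j) [0..<m]) @ x # drop r (map (\<lambda>j. vs ! s j) [0..<m])"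
proof (rule nth_equalityI)
  show "length (map (\<lambda>j. (vs @ [x]) ! ins m r s j) [0..<Suc m]) =
    length (take r (map (\<lambda>j. vs ! s j) [0..<m]) @ x # drop r (map (\<lambda>j. vs ! s j) [0..<m]))"
    using r by simp
  have lt: "\<And>a. a < m \<Longrightarrow> s a < m" using permutes_in_image[OF s] by auto
  fix k assume k: "k < length (map (\<lambda>j. (vs @ [x]) ! ins m r s j) [0..<Suc m])"
  then have k': "k < Suc m" by simp
  consider "k < r" | "k = r" | "r < k" by linarith
  then show "map (\<lambda>j. (vs @ [x]) ! ins m r s j) [0..<Suc m] ! k =
    (take r (map (\<lambda>j. vs ! s j) [0..<m]) @ x # drop r (map (\<lambda>j. vs ! s j) [0..<m])) ! k"
  proof cases
    case 1 then show ?thesis using r k' lt l by (simp add: ins_def nth_append min_def)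
  next
    case 2 then show ?thesis using r k' lt l by (simp add: ins_def nth_append min_def)
  next
    case 3 
    then obtain c where c: "k = Suc c" "r \<le> c" "c < m" using k' by (cases k) auto
    have "m - Suc 0 = c" if "\<not> Suc c < m" using c that by simp
    then show ?thesis using c r lt l by (simp add: ins_def nth_append min_def)
  qed
qed

definition sh :: "nat \<Rightarrow> nat \<Rightarrow> nat" where "sh r a = (if a < r then a else a - 1)"
definition un :: "nat \<Rightarrow> nat \<Rightarrow> nat" where "un r a = (if a < r then a else Suc a)"

lemma coef_ins:
  fixes p :: "nat \<Rightarrow> nat \<Rightarrow> 'a::comm_monoid_mult"
  assumes s: "s permutes {..<m}" and r: "r \<le> m" and l: "length vs = m"
  shows "(\<Prod>(a,b) \<in> {(a,b). b < a \<and> a < Suc m \<and> ins m r s a < ins m r s b}.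
            p ((vs@[x]) ! ins m r s b) ((vs@[x]) ! ins m r s a))
       = (\<Prod>c \<in> {r..<m}. p x (vs ! s c)) *
         (\<Prod>(a,b) \<in> {(a,b). b < a \<and> a < m \<and> s a < s b}. p (vs ! s b) (vs ! s a))"
proof -
  have lt: "\<And>a. a < m \<Longrightarrow> s a < m" using permutes_in_image[OF s] by auto
  have inj: "inj s" using s permutes_inj by blast
  define I where "I = {(a,b). b < a \<and> a < Suc m \<and> ins m r s a < ins m r s b}"
  define A where "A = (\<lambda>c. (Suc c, r)) ` {r..<m}"
  define B where "B = {(a,b). (a,b) \<in> I \<and> a \<noteq> r \<and> b \<noteq> r}"
  define T where "T = (\<lambda>(a,b). p ((vs@[x]) ! ins m r s b) ((vs@[x]) ! ins m r s a))"
  have insv: "\<And>a. a < Suc m \<Longrightarrow> a \<noteq> r \<Longrightarrow> ins m r s a = s (sh r a) \<and> sh r a < m"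
    using r by (auto simp: ins_def sh_def)
  have IAB: "I = A \<union> B"
  proof
    show "I \<subseteq> A \<union> B"
    proof
      fix z assume z: "z \<in> I"
      obtain a b where ab: "z = (a,b)" by fastforce
      have "a \<noteq> r"
      proof
        assume "a = r"
        then have "ins m r s a = m" by (simp add: ins_def)
        moreover have "ins m r s b < Suc m" using z ab permutes_in_image[OF ins_permutes[OF s r], of b] by (auto simp: I_def)
        ultimately show False using z ab by (auto simp: I_def)
      qed
      moreover have "b = r \<Longrightarrow> z \<in> A"
      proof -
        assume "b = r"
        then have "a = Suc (a - 1)" "a - 1 \<in> {r..<m}" using z ab by (auto simp: I_def)
        then show "z \<in> A" unfolding A_def using ab \<open>b = r\<close> by (metis image_eqI)
      qed
      ultimately show "z \<in> A \<union> B" using z ab by (auto simp: B_def)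
    qed
    show "A \<union> B \<subseteq> I"
    proof -
      have "A \<subseteq> I" unfolding A_def I_def using lt by (auto simp: ins_def)
      then show ?thesis unfolding B_def by auto
    qed
  qed
  have fin: "finite I" unfolding I_def by (rule finite_subset[of _ "{..<Suc m} \<times> {..<Suc m}"]) auto
  have disj: "A \<inter> B = {}" unfolding A_def B_def by auto
  have "prod T I = prod T A * prod T B"
    using IAB fin disj by (simp add: prod.union_disjoint)
  moreover have "prod T A = (\<Prod>c \<in> {r..<m}. p x (vs ! s c))"
    unfolding A_def
    by (subst prod.reindex) (auto simp: inj_on_def T_def ins_def nth_append l lt intro!: prod.cong)
  moreover have "prod T B = (\<Prod>(a,b) \<in> {(a,b). b < a \<and> a < m \<and> s a < s b}. p (vs ! s b) (vs ! s a))"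
  proof (rule prod.reindex_bij_witness[where j = "\<lambda>(a,b). (sh r a, sh r b)" and i = "\<lambda>(a,b). (un r a, un r b)"])
    fix z assume "z \<in> B"
    then obtain a b where z: "z = (a,b)" "b < a" "a < Suc m" "a \<noteq> r" "b \<noteq> r" "ins m r s a < ins m r s b"
      unfolding B_def I_def by auto
    show "(case (case z of (a, b) \<Rightarrow> (sh r a, sh r b)) of (a, b) \<Rightarrow> (un r a, un r b)) = z"
      using z by (auto simp: sh_def un_def)
    have ia: "ins m r s a = s (sh r a)" "sh r a < m" using insv z by auto
    have ib: "ins m r s b = s (sh r b)" "sh r b < m" using insv z by auto
    have "sh r b < sh r a" using z by (auto simp: sh_def)
    then show "(case z of (a, b) \<Rightarrow> (sh r a, sh r b)) \<in> {(a, b). b < a \<and> a < m \<and> s a < s b}"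
      using z ia ib by auto
    show "(case (case z of (a, b) \<Rightarrow> (sh r a, sh r b)) of (a, b) \<Rightarrow> p (vs ! s b) (vs ! s a)) = T z"
      using z ia ib lt l by (simp add: T_def nth_append)
  next
    fix z assume "z \<in> {(a, b). b < a \<and> a < m \<and> s a < s b}"
    then obtain a b where z: "z = (a,b)" "b < a" "a < m" "s a < s b" by auto
    show "(case (case z of (a, b) \<Rightarrow> (un r a, un r b)) of (a, b) \<Rightarrow> (sh r a, sh r b)) = z"
      using z by (auto simp: sh_def un_def)
    have "ins m r s (un r a) = s a" "ins m r s (un r b) = s b" using z r by (auto simp: ins_def un_def)
    moreover have "un r b < un r a" "un r a < Suc m" "un r a \<noteq> r" "un r b \<noteq> r" using z r by (auto simp: un_def)
    ultimately show "(case z of (a, b) \<Rightarrow> (un r a, un r b)) \<in> B"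
      using z by (auto simp: B_def I_def)
  qed
  ultimately show ?thesis by (simp add: T_def I_def)
qed

lemma qsym_snoc:
  fixes p :: "nat \<Rightarrow> nat \<Rightarrow> 'a::comm_ring_1"
  assumes l: "length vs = m"
  shows "qsym p (Suc m) u (vs @ [x]) =
    (\<Sum>r\<le>m. qsym p m (\<lambda>w. (\<Prod>c\<in>{r..<m}. p x (w ! c)) * u (take r w @ x # drop r w)) vs)"
proof -
  define C where "C = (\<lambda>s. \<Prod>(a,b) \<in> {(a,b). b < a \<and> a < m \<and> s a < s b}. p (vs ! s b) (vs ! s a))"
  define W where "W = (\<lambda>s. map (\<lambda>j. vs ! s j) [0..<m])"
  define h where "h = (\<lambda>(r,s). C s * ((\<Prod>c\<in>{r..<m}. p x (W s ! c)) * u (take r (W s) @ x # drop r (W s))))"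
  have rhs: "(\<Sum>r\<le>m. qsym p m (\<lambda>w. (\<Prod>c\<in>{r..<m}. p x (w ! c)) * u (take r w @ x # drop r w)) vs)
     = (\<Sum>z \<in> {..m} \<times> {s. s permutes {..<m}}. h z)"
    unfolding qsym_def using l
    by (simp add: sum.cartesian_product h_def C_def W_def)
  have lhs: "qsym p (Suc m) u (vs @ [x]) = (\<Sum>\<sigma> \<in> {\<sigma>. \<sigma> permutes {..<Suc m}}.
      (\<Prod>(a,b) \<in> {(a,b). b < a \<and> a < Suc m \<and> \<sigma> a < \<sigma> b}. p ((vs@[x]) ! \<sigma> b) ((vs@[x]) ! \<sigma> a))
         * u (map (\<lambda>j. (vs@[x]) ! \<sigma> j) [0..<Suc m]))"
    unfolding qsym_def using l by simp
  have main: "(\<Sum>\<sigma> \<in> {\<sigma>. \<sigma> permutes {..<Suc m}}.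
      (\<Prod>(a,b) \<in> {(a,b). b < a \<and> a < Suc m \<and> \<sigma> a < \<sigma> b}. p ((vs@[x]) ! \<sigma> b) ((vs@[x]) ! \<sigma> a))
         * u (map (\<lambda>j. (vs@[x]) ! \<sigma> j) [0..<Suc m])) = (\<Sum>z \<in> {..m} \<times> {s. s permutes {..<m}}. h z)"
  proof (rule sum.reindex_bij_witness[where j = "\<lambda>\<sigma>. (inv \<sigma> m, del m (inv \<sigma> m) \<sigma>)" and i = "\<lambda>(r,s). ins m r s"])
    fix \<sigma> assume "\<sigma> \<in> {\<sigma>. \<sigma> permutes {..<Suc m}}"
    then have \<sigma>: "\<sigma> permutes {..<Suc m}" by simp
    have r1: "\<sigma> (inv \<sigma> m) = m" using permutes_inverses(1)[OF \<sigma>] by simp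
    have r2: "inv \<sigma> m \<le> m" using permutes_in_image[OF permutes_inv[OF \<sigma>], of m] by simp
    define r where "r = inv \<sigma> m"
    define s where "s = del m r \<sigma>"
    have sp: "s permutes {..<m}" unfolding s_def r_def using del_permutes[OF \<sigma> r1 r2] .
    have se: "\<sigma> = ins m r s" unfolding s_def r_def using ins_del[OF \<sigma> r1 r2] by simp
    show "(case (inv \<sigma> m, del m (inv \<sigma> m) \<sigma>) of (r, s) \<Rightarrow> ins m r s) = \<sigma>"
      using ins_del[OF \<sigma> r1 r2] by simp
    show "(inv \<sigma> m, del m (inv \<sigma> m) \<sigma>) \<in> {..m} \<times> {s. s permutes {..<m}}"
      using r2 del_permutes[OF \<sigma> r1 r2] by simp
    have rm: "r \<le> m" using r2 r_def by simp
    show "h (inv \<sigma> m, del m (inv \<sigma> m) \<sigma>) =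
      (\<Prod>(a,b) \<in> {(a,b). b < a \<and> a < Suc m \<and> \<sigma> a < \<sigma> b}. p ((vs@[x]) ! \<sigma> b) ((vs@[x]) ! \<sigma> a))
         * u (map (\<lambda>j. (vs@[x]) ! \<sigma> j) [0..<Suc m])"
    proof -
      have eq: "h (r, s) =
        (\<Prod>(a,b) \<in> {(a,b). b < a \<and> a < Suc m \<and> ins m r s a < ins m r s b}. p ((vs@[x]) ! ins m r s b) ((vs@[x]) ! ins m r s a))
         * u (map (\<lambda>j. (vs@[x]) ! ins m r s j) [0..<Suc m])"
        unfolding coef_ins[OF sp rm l] word_ins[OF sp rm l]
        using l sp permutes_in_image[OF sp] by (simp add: h_def C_def W_def)
      show ?thesis unfolding r_def[symmetric] unfolding s_def[symmetric] using eq se by simp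
    qed
  next
    fix z assume z: "z \<in> {..m} \<times> {s. s permutes {..<m}}"
    then obtain r s where rs: "z = (r,s)" "r \<le> m" "s permutes {..<m}" by auto
    have ip: "ins m r s permutes {..<Suc m}" using ins_permutes[OF rs(3,2)] .
    have iv: "inv (ins m r s) m = r"
      using permutes_inverses(2)[OF ip, of r] by (simp add: ins_r)
    show "(inv (case z of (r, s) \<Rightarrow> ins m r s) m, del m (inv (case z of (r, s) \<Rightarrow> ins m r s) m) (case z of (r, s) \<Rightarrow> ins m r s)) = z"
      using rs iv del_ins[OF rs(3,2)] by simp
    show "(case z of (r, s) \<Rightarrow> ins m r s) \<in> {\<sigma>. \<sigma> permutes {..<Suc m}}" using rs ip by simp
  qed
  show ?thesis using lhs main rhs by simp
qed

definition rho :: "nat \<Rightarrow> nat \<Rightarrow> nat" where "rho m x = (if x < m then m - 1 - x else x)"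

lemma rho_rho[simp]: "rho m (rho m x) = x" by (auto simp: rho_def)
lemma rho_lt: "x < m \<Longrightarrow> rho m x < m" by (auto simp: rho_def)

lemma rho_conj_permutes:
  assumes "t permutes {..<m}" shows "(\<lambda>x. rho m (t (rho m x))) permutes {..<m}"
proof -
  have "rho m permutes {..<m}"
    by (rule inj_imp_permutes) (auto simp: rho_def inj_on_def)
  then have "rho m \<circ> t \<circ> rho m permutes {..<m}" using assms by (simp add: permutes_compose)
  then show ?thesis by (simp add: comp_def)
qed

lemma qsym_rev:
  fixes p :: "nat \<Rightarrow> nat \<Rightarrow> 'a::comm_ring_1"
  assumes l: "length v = m"
  shows "qsym p m u (rev v) = qsym (\<lambda>a b. p b a) m (\<lambda>w. u (rev w)) v"
proof -
  have "(\<Sum>\<tau> | \<tau> permutes {..<m}.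
         (\<Prod>(a,b) \<in> {(a,b). b < a \<and> a < m \<and> \<tau> a < \<tau> b}. p (rev v ! \<tau> b) (rev v ! \<tau> a))
         * u (map (\<lambda>j. rev v ! \<tau> j) [0..<m]))
      = (\<Sum>\<tau> | \<tau> permutes {..<m}.
         (\<Prod>(a,b) \<in> {(a,b). b < a \<and> a < m \<and> \<tau> a < \<tau> b}. p (v ! \<tau> a) (v ! \<tau> b))
         * u (rev (map (\<lambda>j. v ! \<tau> j) [0..<m])))"
  proof (rule sum.reindex_bij_witness[where j = "\<lambda>t x. rho m (t (rho m x))" and i = "\<lambda>t x. rho m (t (rho m x))"])
    fix t assume "t \<in> {\<tau>. \<tau> permutes {..<m}}"
    then have t: "t permutes {..<m}" by simp
    have tl: "\<And>x. x < m \<Longrightarrow> t x < m" using permutes_in_image[OF t] by auto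
    show "(\<lambda>x. rho m (rho m (t (rho m (rho m x))))) = t" by simp
    show "(\<lambda>x. rho m (t (rho m x))) \<in> {\<tau>. \<tau> permutes {..<m}}" using rho_conj_permutes[OF t] by simp
    define s where "s = (\<lambda>x. rho m (t (rho m x)))"
    have w: "rev (map (\<lambda>j. v ! s j) [0..<m]) = map (\<lambda>j. rev v ! t j) [0..<m]"
    proof (rule nth_equalityI)
      show "length (rev (map (\<lambda>j. v ! s j) [0..<m])) = length (map (\<lambda>j. rev v ! t j) [0..<m])" by simp
      fix k assume "k < length (rev (map (\<lambda>j. v ! s j) [0..<m]))"
      then have k: "k < m" by simp
      have "rho m k = m - 1 - k" using k by (simp add: rho_def)
      moreover have "rho m (t k) = m - 1 - t k" using tl[OF k] by (simp add: rho_def)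
      ultimately show "rev (map (\<lambda>j. v ! s j) [0..<m]) ! k = map (\<lambda>j. rev v ! t j) [0..<m] ! k"
        using k tl[OF k] l by (simp add: rev_nth s_def rho_def)
    qed
    have pr: "(\<Prod>(a,b) \<in> {(a,b). b < a \<and> a < m \<and> s a < s b}. p (v ! s a) (v ! s b))
      = (\<Prod>(a,b) \<in> {(a,b). b < a \<and> a < m \<and> t a < t b}. p (rev v ! t b) (rev v ! t a))"
    proof (rule prod.reindex_bij_witness[where j = "\<lambda>(a,b). (rho m b, rho m a)" and i = "\<lambda>(a,b). (rho m b, rho m a)"])
      fix z assume "z \<in> {(a,b). b < a \<and> a < m \<and> s a < s b}"
      then obtain a b where z: "z = (a,b)" "b < a" "a < m" "s a < s b" by auto
      show "(case (case z of (a, b) \<Rightarrow> (rho m b, rho m a)) of (a, b) \<Rightarrow> (rho m b, rho m a)) = z" using z by simp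
      have "rho m a < rho m b" "rho m b < m" using z by (auto simp: rho_def)
      moreover have "t (rho m b) < t (rho m a)"
        using z tl[of "rho m a"] tl[of "rho m b"] rho_lt[of a m] rho_lt[of b m] by (auto simp: s_def rho_def)
      ultimately show "(case z of (a, b) \<Rightarrow> (rho m b, rho m a)) \<in> {(a,b). b < a \<and> a < m \<and> t a < t b}" using z by simp
      have "rev v ! t (rho m a) = v ! s a" "rev v ! t (rho m b) = v ! s b"
        using z tl[of "rho m a"] tl[of "rho m b"] rho_lt[of a m] rho_lt[of b m] l
        by (auto simp: s_def rev_nth rho_def)
      then show "(case (case z of (a, b) \<Rightarrow> (rho m b, rho m a)) of (a, b) \<Rightarrow> p (rev v ! t b) (rev v ! t a)) =
         (case z of (a, b) \<Rightarrow> p (v ! s a) (v ! s b))" using z by simp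
    next
      fix z assume "z \<in> {(a,b). b < a \<and> a < m \<and> t a < t b}"
      then obtain a b where z: "z = (a,b)" "b < a" "a < m" "t a < t b" by auto
      show "(case (case z of (a, b) \<Rightarrow> (rho m b, rho m a)) of (a, b) \<Rightarrow> (rho m b, rho m a)) = z" using z by simp
      have "rho m a < rho m b" "rho m b < m" using z by (auto simp: rho_def)
      moreover have "s (rho m b) < s (rho m a)"
        using z tl[of a] tl[of b] by (auto simp: s_def rho_def)
      ultimately show "(case z of (a, b) \<Rightarrow> (rho m b, rho m a)) \<in> {(a,b). b < a \<and> a < m \<and> s a < s b}" using z by simp
    qed
    show "(\<Prod>(a,b) \<in> {(a,b). b < a \<and> a < m \<and> s a < s b}. p (v ! s a) (v ! s b)) * u (rev (map (\<lambda>j. v ! s j) [0..<m]))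
       = (\<Prod>(a,b) \<in> {(a,b). b < a \<and> a < m \<and> t a < t b}. p (rev v ! t b) (rev v ! t a)) * u (map (\<lambda>j. rev v ! t j) [0..<m])"
      using pr w by simp
  next
    fix t assume "t \<in> {\<tau>. \<tau> permutes {..<m}}"
    then have t: "t permutes {..<m}" by simp
    show "(\<lambda>x. rho m (rho m (t (rho m (rho m x))))) = t" by simp
    show "(\<lambda>x. rho m (t (rho m x))) \<in> {\<tau>. \<tau> permutes {..<m}}" using rho_conj_permutes[OF t] by simp
  qed
  then show ?thesis unfolding qsym_def using l by simp
qed

definition Fq :: "(nat \<Rightarrow> nat \<Rightarrow> 'a::comm_ring_1) \<Rightarrow> nat \<Rightarrow> nat \<Rightarrow> 'a" where
  "Fq p i m = qsym p m (\<lambda>_. 1) (replicate m i)"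

lemma qsym_rep:
  fixes p :: "nat \<Rightarrow> nat \<Rightarrow> 'a::comm_ring_1"
  shows "qsym p m g (replicate m i) = g (replicate m i) * Fq p i m"
proof -
  have "\<And>\<sigma>. \<sigma> permutes {..<m} \<Longrightarrow> map (\<lambda>j. replicate m i ! \<sigma> j) [0..<m] = replicate m i"
  proof -
    fix \<sigma> assume s: "\<sigma> permutes {..<m}"
    show "map (\<lambda>j. replicate m i ! \<sigma> j) [0..<m] = replicate m i"
      by (rule nth_equalityI) (use permutes_in_image[OF s] in auto)
  qed
  then have "qsym p m g (replicate m i) = Fq p i m * g (replicate m i)" unfolding Fq_def qsym_def
    by (auto simp: sum_distrib_right intro!: sum.cong)
  then show ?thesis by (simp add: mult.commute)
qed

lemma phiA_formula:
  fixes p :: "nat \<Rightarrow> nat \<Rightarrow> 'a::comm_ring_1"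
  shows "qsym p (Suc m) u (replicate m i @ [j]) =
    Fq p i m * (\<Sum>r\<le>m. p j i ^ (m - r) * u (replicate r i @ j # replicate (m - r) i))"
proof -
  have "qsym p (Suc m) u (replicate m i @ [j]) =
    (\<Sum>r\<le>m. qsym p m (\<lambda>w. (\<Prod>c\<in>{r..<m}. p j (w ! c)) * u (take r w @ j # drop r w)) (replicate m i))"
    by (rule qsym_snoc) simp
  also have "\<dots> = (\<Sum>r\<le>m. Fq p i m * (p j i ^ (m - r) * u (replicate r i @ j # replicate (m - r) i)))"
    by (rule sum.cong) (auto simp: qsym_rep mult.commute min_def)
  finally show ?thesis by (simp add: sum_distrib_left)
qed

lemma Fq_Suc:
  fixes p :: "nat \<Rightarrow> nat \<Rightarrow> 'a::comm_ring_1"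
  shows "Fq p i (Suc m) = Fq p i m * (\<Sum>r\<le>m. p i i ^ (m - r))"
proof -
  have "Fq p i (Suc m) = qsym p (Suc m) (\<lambda>_. 1) (replicate m i @ [i])"
    unfolding Fq_def by (simp add: replicate_append_same)
  then show ?thesis by (simp add: phiA_formula)
qed

lemma Fq_0: "Fq p i 0 = 1"
  unfolding Fq_def qsym_def by simp

lemma Fq_nz:
  fixes p :: "nat \<Rightarrow> nat \<Rightarrow> 'a::field_char_0"
  assumes q: "p i i = 1 \<or> (\<forall>k>0. p i i ^ k \<noteq> 1)"
  shows "Fq p i m \<noteq> 0"
proof (induction m)
  case 0 then show ?case by (simp add: Fq_0)
next
  case (Suc m)
  have e: "(\<Sum>r\<le>m. p i i ^ (m - r)) = (\<Sum>r<Suc m. p i i ^ r)"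
  proof -
    have "(\<Sum>r<Suc m. p i i ^ (Suc m - Suc r)) = (\<Sum>r<Suc m. p i i ^ r)"
      by (rule sum.nat_diff_reindex)
    then show ?thesis by (simp add: lessThan_Suc_atMost)
  qed
  have "(\<Sum>r<Suc m. p i i ^ r) \<noteq> 0"
  proof (cases "p i i = 1")
    case True
    have "of_nat (Suc m) \<noteq> (0::'a)" by (rule of_nat_neq_0)
    then show ?thesis using True by simp
  next
    case False
    then have "p i i ^ Suc m \<noteq> 1" using q by blast
    then have "(1 - p i i) * (\<Sum>r<Suc m. p i i ^ r) \<noteq> 0"
      unfolding one_diff_power_eq[symmetric] by simp
    then show ?thesis by auto
  qed
  then show ?case using Suc e by (simp add: Fq_Suc)
qed

definition phiA :: "(nat \<Rightarrow> nat \<Rightarrow> 'a::comm_ring_1) \<Rightarrow> nat \<Rightarrow> nat \<Rightarrow> nat \<Rightarrow> 'a tens \<Rightarrow> 'a" where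
  "phiA p i j m y = (\<Sum>r\<le>m. p j i ^ (m - r) * y (replicate r i @ j # replicate (m - r) i))"
definition phiB :: "(nat \<Rightarrow> nat \<Rightarrow> 'a::comm_ring_1) \<Rightarrow> nat \<Rightarrow> nat \<Rightarrow> nat \<Rightarrow> 'a tens \<Rightarrow> 'a" where
  "phiB p i j m y = (\<Sum>r\<le>m. p i j ^ r * y (replicate r i @ j # replicate (m - r) i))"

lemma phiA_qsym:
  fixes p :: "nat \<Rightarrow> nat \<Rightarrow> 'a::comm_ring_1"
  shows "qsym p (Suc m) y (replicate m i @ [j]) = Fq p i m * phiA p i j m y"
  unfolding phiA_def by (rule phiA_formula)

lemma phiB_qsym:
  fixes p :: "nat \<Rightarrow> nat \<Rightarrow> 'a::comm_ring_1"
  shows "qsym p (Suc m) y (j # replicate m i) = Fq (\<lambda>a b. p b a) i m * phiB p i j m y"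
proof -
  have "j # replicate m i = rev (replicate m i @ [j])" by simp
  then have "qsym p (Suc m) y (j # replicate m i) = qsym (\<lambda>a b. p b a) (Suc m) (\<lambda>w. y (rev w)) (replicate m i @ [j])"
    using qsym_rev[of "replicate m i @ [j]" "Suc m" p y] by simp
  also have "\<dots> = Fq (\<lambda>a b. p b a) i m * (\<Sum>r\<le>m. p i j ^ (m - r) * y (replicate (m - r) i @ j # replicate r i))"
    by (simp add: phiA_formula replicate_append_same)
  also have "(\<Sum>r\<le>m. p i j ^ (m - r) * y (replicate (m - r) i @ j # replicate r i)) = phiB p i j m y"
    unfolding phiB_def
    by (rule sum.reindex_bij_witness[where i = "\<lambda>r. m - r" and j = "\<lambda>r. m - r"]) auto
  finally show ?thesis .
qed

lemma tmult_gen_left: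
  fixes y :: "'a::comm_semiring_1 tens"
  shows "tmult (tgen i) y (a # w) = (if a = i then y w else 0)"
proof -
  have "tmult (tgen i) y (a # w) = (\<Sum>k\<le>Suc (length w). (if k = 1 then (if a = i then y w else 0) else 0))"
    unfolding tmult_def
  proof (rule sum.cong)
    fix k assume k: "k \<in> {..Suc (length w)}"
    have "take k (a # w) = [i] \<longleftrightarrow> k = 1 \<and> a = i"
      using k by (cases k) auto
    then show "tgen i (take k (a # w)) * y (drop k (a # w)) = (if k = 1 then (if a = i then y w else 0) else 0)"
      by (auto simp: tgen_def)
  qed simp
  then show ?thesis by (simp only: sum.delta finite_atMost) simp
qed

lemma tmult_gen_right:
  fixes y :: "'a::comm_semiring_1 tens"
  shows "tmult y (tgen i) (w @ [a]) = (if a = i then y w else 0)"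
proof -
  have "tmult y (tgen i) (w @ [a]) = (\<Sum>k\<le>Suc (length w). (if k = length w then (if a = i then y w else 0) else 0))"
    unfolding tmult_def
  proof (rule sum.cong)
    fix k assume k: "k \<in> {..Suc (length w)}"
    have "drop k (w @ [a]) = [i] \<longleftrightarrow> k = length w \<and> a = i"
    proof (cases "k \<le> length w")
      case True
      then have "length (drop k (w @ [a])) = Suc (length w - k)" by simp
      then show ?thesis using True by (auto simp: drop_append)
    next
      case False then show ?thesis using k by auto
    qed
    then show "y (take k (w @ [a])) * tgen i (drop k (w @ [a])) = (if k = length w then (if a = i then y w else 0) else 0)"
      by (auto simp: tgen_def)
  qed simp
  then show ?thesis by (simp only: sum.delta finite_atMost) simp
qed

lemma phiA_left:
  fixes p :: "nat \<Rightarrow> nat \<Rightarrow> 'a::comm_ring_1"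
  assumes "i \<noteq> j"
  shows "phiA p i j (Suc m) (tmult (tgen i) y) = phiA p i j m y"
  unfolding phiA_def using assms
  by (subst sum.atMost_Suc_shift) (simp add: tmult_gen_left)

lemma phiA_right:
  fixes p :: "nat \<Rightarrow> nat \<Rightarrow> 'a::comm_ring_1"
  assumes "i \<noteq> j"
  shows "phiA p i j (Suc m) (tmult y (tgen i)) = p j i * phiA p i j m y"
proof -
  have w: "\<And>r. r \<le> m \<Longrightarrow> replicate r i @ j # replicate (Suc m - r) i = (replicate r i @ j # replicate (m - r) i) @ [i]"
    by (simp add: Suc_diff_le replicate_append_same)
  have last: "tmult y (tgen i) (replicate (Suc m) i @ j # replicate (Suc m - Suc m) i) = 0"
    using tmult_gen_right[of y i "replicate (Suc m) i" j] assms by simp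
  have "phiA p i j (Suc m) (tmult y (tgen i)) = (\<Sum>r\<le>m. p j i ^ (Suc m - r) * tmult y (tgen i) (replicate r i @ j # replicate (Suc m - r) i))"
    unfolding phiA_def by (simp only: sum.atMost_Suc last) simp
  also have "\<dots> = (\<Sum>r\<le>m. p j i * (p j i ^ (m - r) * y (replicate r i @ j # replicate (m - r) i)))"
  proof (rule sum.cong)
    fix r assume "r \<in> {..m}" then have r: "r \<le> m" by simp
    have t: "tmult y (tgen i) (replicate r i @ j # replicate (Suc m - r) i) = y (replicate r i @ j # replicate (m - r) i)"
      unfolding w[OF r] tmult_gen_right by simp
    have e: "p j i ^ (Suc m - r) = p j i * p j i ^ (m - r)" using r by (simp add: Suc_diff_le)
    show "p j i ^ (Suc m - r) * tmult y (tgen i) (replicate r i @ j # replicate (Suc m - r) i) =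
      p j i * (p j i ^ (m - r) * y (replicate r i @ j # replicate (m - r) i))"
      unfolding t e by (simp add: mult.assoc)
  qed simp
  finally show ?thesis unfolding phiA_def by (simp add: sum_distrib_left)
qed

lemma phiB_left:
  fixes p :: "nat \<Rightarrow> nat \<Rightarrow> 'a::comm_ring_1"
  assumes "i \<noteq> j"
  shows "phiB p i j (Suc m) (tmult (tgen i) y) = p i j * phiB p i j m y"
  unfolding phiB_def using assms
  by (subst sum.atMost_Suc_shift) (simp add: tmult_gen_left sum_distrib_left mult.assoc)

lemma phiB_right:
  fixes p :: "nat \<Rightarrow> nat \<Rightarrow> 'a::comm_ring_1"
  assumes "i \<noteq> j"
  shows "phiB p i j (Suc m) (tmult y (tgen i)) = phiB p i j m y"
proof -
  have w: "\<And>r. r \<le> m \<Longrightarrow> replicate r i @ j # replicate (Suc m - r) i = (replicate r i @ j # replicate (m - r) i) @ [i]"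
    by (simp add: Suc_diff_le replicate_append_same)
  have last: "tmult y (tgen i) (replicate (Suc m) i @ j # replicate (Suc m - Suc m) i) = 0"
    using tmult_gen_right[of y i "replicate (Suc m) i" j] assms by simp
  have "phiB p i j (Suc m) (tmult y (tgen i)) = (\<Sum>r\<le>m. p i j ^ r * tmult y (tgen i) (replicate r i @ j # replicate (Suc m - r) i))"
    unfolding phiB_def by (simp only: sum.atMost_Suc last) simp
  also have "\<dots> = (\<Sum>r\<le>m. p i j ^ r * y (replicate r i @ j # replicate (m - r) i))"
  proof (rule sum.cong)
    fix r assume "r \<in> {..m}" then have r: "r \<le> m" by simp
    have t: "tmult y (tgen i) (replicate r i @ j # replicate (Suc m - r) i) = y (replicate r i @ j # replicate (m - r) i)"
      unfolding w[OF r] tmult_gen_right by simp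
    show "p i j ^ r * tmult y (tgen i) (replicate r i @ j # replicate (Suc m - r) i) =
      p i j ^ r * y (replicate r i @ j # replicate (m - r) i)"
      unfolding t by simp
  qed simp
  finally show ?thesis unfolding phiB_def by simp
qed

definition delta :: "nat \<Rightarrow> nat \<Rightarrow> nat" where "delta i = (\<lambda>k. if k = i then 1 else 0)"
definition degf :: "nat \<Rightarrow> nat \<Rightarrow> nat \<Rightarrow> nat \<Rightarrow> nat" where
  "degf i j m = (\<lambda>k. (if k = i then m else 0) + (if k = j then 1 else 0))"

lemma prod_two:
  fixes f :: "nat \<Rightarrow> 'a::comm_monoid_mult"
  assumes "i < n" "j < n" "i \<noteq> j"
  shows "(\<Prod>b<n. f b ^ degf i j m b) = f i ^ m * f j"
proof -
  have "(\<Prod>b<n. f b ^ degf i j m b) = (\<Prod>b<n. (if b = i then f i ^ m else 1) * (if b = j then f j else 1))"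
    by (rule prod.cong) (auto simp: degf_def power_add)
  also have "\<dots> = f i ^ m * f j" using assms by (simp add: prod.distrib prod.delta)
  finally show ?thesis .
qed

lemma bichar1:
  fixes p :: "nat \<Rightarrow> nat \<Rightarrow> 'a::comm_monoid_mult"
  assumes "i < n" "j < n" "i \<noteq> j"
  shows "bichar n p (delta i) (degf i j m) = p i i ^ m * p i j"
proof -
  have "bichar n p (delta i) (degf i j m) = (\<Prod>a<n. if a = i then (\<Prod>b<n. p i b ^ degf i j m b) else 1)"
    unfolding bichar_def by (rule prod.cong) (auto simp: delta_def)
  also have "\<dots> = (\<Prod>b<n. p i b ^ degf i j m b)" using assms by (simp add: prod.delta)
  finally show ?thesis using prod_two[OF assms, of "p i"] by simp
qed

lemma bichar2:
  fixes p :: "nat \<Rightarrow> nat \<Rightarrow> 'a::comm_monoid_mult"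
  assumes "i < n" "j < n" "i \<noteq> j"
  shows "bichar n p (degf i j m) (delta i) = p i i ^ m * p j i"
proof -
  have "bichar n p (degf i j m) (delta i) = (\<Prod>a<n. p a i ^ degf i j m a)"
    unfolding bichar_def
  proof (rule prod.cong)
    fix a assume "a \<in> {..<n}"
    have "(\<Prod>b<n. p a b ^ (degf i j m a * delta i b)) = (\<Prod>b<n. if b = i then p a i ^ degf i j m a else 1)"
      by (rule prod.cong) (auto simp: delta_def)
    also have "\<dots> = p a i ^ degf i j m a" using assms by (simp add: prod.delta)
    finally show "(\<Prod>b<n. p a b ^ (degf i j m a * delta i b)) = p a i ^ degf i j m a" .
  qed simp
  then show ?thesis using prod_two[OF assms, of "\<lambda>a. p a i"] by simp
qed

primrec yfam :: "((nat \<Rightarrow> nat) \<Rightarrow> (nat \<Rightarrow> nat) \<Rightarrow> 'a tens \<Rightarrow> 'a tens \<Rightarrow> 'a tens) \<Rightarrow> nat \<Rightarrow> nat \<Rightarrow> nat \<Rightarrow> ('a::{zero,one}) tens" where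
  "yfam br i j 0 = tgen j"
| "yfam br i j (Suc m) = br (delta i) (degf i j m) (tgen i) (yfam br i j m)"

lemma yfam_lie:
  assumes "i < n" "j < n"
  shows "(yfam br i j m, degf i j m) \<in> lie_gen n br"
proof (induction m)
  case 0
  have "degf i j 0 = (\<lambda>k. if k = j then 1 else 0)" by (auto simp: degf_def)
  then show ?case using lie_gen.gen[OF assms(2), of br] by simp
next
  case (Suc m)
  have gi: "(tgen i, delta i) \<in> lie_gen n br" using lie_gen.gen[OF assms(1), of br] by (simp add: delta_def)
  have "degf i j (Suc m) = (\<lambda>k. delta i k + degf i j m k)" by (auto simp: degf_def delta_def)
  then show ?case using lie_gen.bra[OF gi Suc] by simp
qed

lemma fam_nz:
  fixes phi :: "nat \<Rightarrow> 'a::field tens \<Rightarrow> 'a"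
  assumes "phi 0 (tgen j) \<noteq> 0"
    and "\<And>m. phi (Suc m) (br (delta i) (degf i j m) (tgen i) (yfam br i j m)) = k m * phi m (yfam br i j m)"
    and "\<And>m. k m \<noteq> 0"
  shows "phi m (yfam br i j m) \<noteq> 0"
  by (induction m) (use assms in auto)


lemma qord_cases:
  fixes q :: "'a::monoid_mult"
  assumes "qord q \<in> {1, \<infinity>}"
  shows "q = 1 \<or> (\<forall>k>0. q ^ k \<noteq> 1)"
proof (cases "\<exists>k>0. q ^ k = 1")
  case True
  then have "(LEAST k. k > 0 \<and> q ^ k = 1) = 1" using assms by (auto simp: qord_def one_enat_def)
  moreover have "q ^ (LEAST k. k > 0 \<and> q ^ k = 1) = 1" using LeastI_ex[OF True] by blast
  ultimately show ?thesis by simp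
next
  case False then show ?thesis by blast
qed

lemma phiA_lin:
  "phiA p i j m (\<lambda>w. a * f w - b * g w) = a * phiA p i j m f - b * phiA p i j m g"
  unfolding phiA_def by (simp add: sum_subtractf sum_distrib_left algebra_simps)

lemma phiB_lin:
  "phiB p i j m (\<lambda>w. a * f w - b * g w) = a * phiB p i j m f - b * phiB p i j m g"
  unfolding phiB_def by (simp add: sum_subtractf sum_distrib_left algebra_simps)

lemma phiA_0: "phiA p i j 0 (tgen j) = 1" by (simp add: phiA_def tgen_def)
lemma phiB_0: "phiB p i j 0 (tgen j) = 1" by (simp add: phiB_def tgen_def)

lemma in_lie:
  fixes u :: "'a::field tens"
  assumes "(u, d) \<in> lie_gen n br"
  shows "u \<in> tspan (fst ` lie_gen n br)"
  by (rule module.span_base[OF tmod]) (use assms in force)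

theorem proposition6p8:
  fixes n :: nat and p :: "nat \<Rightarrow> nat \<Rightarrow> 'a::field_char_0"
  assumes "\<forall>i<n. \<forall>j<n. p i j \<noteq> 0"
  shows "((\<exists>i<n. \<exists>j<n. i \<noteq> j \<and> (p i j \<noteq> (p j i)^2 \<or> p j i \<noteq> (p i j)^2)
            \<and> qord (p i i) \<in> {1, \<infinity>}) \<longrightarrow> nichols_infdim n p (lieR n p))
       \<and> ((\<exists>i<n. \<exists>j<n. i \<noteq> j \<and> (p i j \<noteq> 1 \<or> p j i \<noteq> 1)
            \<and> qord (p i i) \<in> {1, \<infinity>}) \<longrightarrow> nichols_infdim n p (lieL n p))"
proof (intro conjI impI)
  assume "\<exists>i<n. \<exists>j<n. i \<noteq> j \<and> (p i j \<noteq> (p j i)^2 \<or> p j i \<noteq> (p i j)^2) \<and> qord (p i i) \<in> {1, \<infinity>}"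
  then obtain i j where ij: "i < n" "j < n" "i \<noteq> j" "p i j \<noteq> (p j i)^2 \<or> p j i \<noteq> (p i j)^2"
    and qo: "qord (p i i) \<in> {1, \<infinity>}" by blast
  have q: "p i i = 1 \<or> (\<forall>k>0. p i i ^ k \<noteq> 1)" using qord_cases[OF qo] .
  have qT: "(\<lambda>a b. p b a) i i = 1 \<or> (\<forall>k>0. (\<lambda>a b. p b a) i i ^ k \<noteq> 1)" using q by simp
  have nz: "p i i \<noteq> 0" "p i j \<noteq> 0" "p j i \<noteq> 0" using assms ij by auto
  define br where "br = brR n p"
  have lie: "\<And>m. yfam br i j m \<in> lieR n p"
    unfolding lieR_def br_def by (rule in_lie) (rule yfam_lie[OF ij(1,2)])
  show "nichols_infdim n p (lieR n p)"
  proof (rule infdim_crit)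
    fix N
    show "\<exists>u m. u \<in> lieR n p \<and> N < m \<and> (\<exists>v. qsym p m u v \<noteq> 0)"
    proof (cases "p i j \<noteq> (p j i)^2")
      case True
      have "phiA p i j N (yfam br i j N) \<noteq> 0"
      proof (rule fam_nz[where k = "\<lambda>m. p i i ^ m * (p i j - p j i * p j i)"])
        show "phiA p i j 0 (tgen j) \<noteq> 0" by (simp add: phiA_0)
        show "\<And>m. p i i ^ m * (p i j - p j i * p j i) \<noteq> 0" using True nz by (simp add: power2_eq_square)
        fix m
        show "phiA p i j (Suc m) (br (delta i) (degf i j m) (tgen i) (yfam br i j m)) =
          p i i ^ m * (p i j - p j i * p j i) * phiA p i j m (yfam br i j m)"
          unfolding br_def brR_def phiA_lin bichar1[OF ij(1-3)] bichar2[OF ij(1-3)]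
            phiA_left[OF ij(3)] phiA_right[OF ij(3)] by (simp add: algebra_simps)
      qed
      then have "qsym p (Suc N) (yfam br i j N) (replicate N i @ [j]) \<noteq> 0"
        using Fq_nz[of p i N, OF q] by (simp add: phiA_qsym)
      then show ?thesis using lie by blast
    next
      case False
      then have F: "p j i \<noteq> (p i j)^2" using ij(4) by blast
      have "phiB p i j N (yfam br i j N) \<noteq> 0"
      proof (rule fam_nz[where k = "\<lambda>m. p i i ^ m * (p i j * p i j - p j i)"])
        show "phiB p i j 0 (tgen j) \<noteq> 0" by (simp add: phiB_0)
        show "\<And>m. p i i ^ m * (p i j * p i j - p j i) \<noteq> 0" using F nz by (simp add: power2_eq_square)
        fix m
        show "phiB p i j (Suc m) (br (delta i) (degf i j m) (tgen i) (yfam br i j m)) =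
          p i i ^ m * (p i j * p i j - p j i) * phiB p i j m (yfam br i j m)"
          unfolding br_def brR_def phiB_lin bichar1[OF ij(1-3)] bichar2[OF ij(1-3)]
            phiB_left[OF ij(3)] phiB_right[OF ij(3)] by (simp add: algebra_simps)
      qed
      then have "qsym p (Suc N) (yfam br i j N) (j # replicate N i) \<noteq> 0"
        using Fq_nz[of "\<lambda>a b. p b a" i N, OF qT] by (simp add: phiB_qsym)
      then show ?thesis using lie by blast
    qed
  qed
next
  assume "\<exists>i<n. \<exists>j<n. i \<noteq> j \<and> (p i j \<noteq> 1 \<or> p j i \<noteq> 1) \<and> qord (p i i) \<in> {1, \<infinity>}"
  then obtain i j where ij: "i < n" "j < n" "i \<noteq> j" "p i j \<noteq> 1 \<or> p j i \<noteq> 1"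
    and qo: "qord (p i i) \<in> {1, \<infinity>}" by blast
  have q: "p i i = 1 \<or> (\<forall>k>0. p i i ^ k \<noteq> 1)" using qord_cases[OF qo] .
  have qT: "(\<lambda>a b. p b a) i i = 1 \<or> (\<forall>k>0. (\<lambda>a b. p b a) i i ^ k \<noteq> 1)" using q by simp
  have nz: "p i i \<noteq> 0" "p i j \<noteq> 0" "p j i \<noteq> 0" using assms ij by auto
  define br where "br = brL n p"
  have lie: "\<And>m. yfam br i j m \<in> lieL n p"
    unfolding lieL_def br_def by (rule in_lie) (rule yfam_lie[OF ij(1,2)])
  show "nichols_infdim n p (lieL n p)"
  proof (rule infdim_crit)
    fix N
    show "\<exists>u m. u \<in> lieL n p \<and> N < m \<and> (\<exists>v. qsym p m u v \<noteq> 0)"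
    proof (cases "p i j \<noteq> 1")
      case True
      have "phiA p i j N (yfam br i j N) \<noteq> 0"
      proof (rule fam_nz[where k = "\<lambda>m. p i i ^ m * p j i * (1 - p i j)"])
        show "phiA p i j 0 (tgen j) \<noteq> 0" by (simp add: phiA_0)
        show "\<And>m. p i i ^ m * p j i * (1 - p i j) \<noteq> 0" using True nz by simp
        fix m
        show "phiA p i j (Suc m) (br (delta i) (degf i j m) (tgen i) (yfam br i j m)) =
          p i i ^ m * p j i * (1 - p i j) * phiA p i j m (yfam br i j m)"
          unfolding br_def brL_def phiA_lin bichar1[OF ij(1-3)] bichar2[OF ij(1-3)]
            phiA_left[OF ij(3)] phiA_right[OF ij(3)] by (simp add: algebra_simps)
      qed
      then have "qsym p (Suc N) (yfam br i j N) (replicate N i @ [j]) \<noteq> 0"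
        using Fq_nz[of p i N, OF q] by (simp add: phiA_qsym)
      then show ?thesis using lie by blast
    next
      case False
      then have F: "p j i \<noteq> 1" using ij(4) by blast
      have "phiB p i j N (yfam br i j N) \<noteq> 0"
      proof (rule fam_nz[where k = "\<lambda>m. p i i ^ m * p i j * (p j i - 1)"])
        show "phiB p i j 0 (tgen j) \<noteq> 0" by (simp add: phiB_0)
        show "\<And>m. p i i ^ m * p i j * (p j i - 1) \<noteq> 0" using F nz by simp
        fix m
        show "phiB p i j (Suc m) (br (delta i) (degf i j m) (tgen i) (yfam br i j m)) =
          p i i ^ m * p i j * (p j i - 1) * phiB p i j m (yfam br i j m)"
          unfolding br_def brL_def phiB_lin bichar1[OF ij(1-3)] bichar2[OF ij(1-3)]
            phiB_left[OF ij(3)] phiB_right[OF ij(3)] by (simp add: algebra_simps)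
      qed
      then have "qsym p (Suc N) (yfam br i j N) (j # replicate N i) \<noteq> 0"
        using Fq_nz[of "\<lambda>a b. p b a" i N, OF qT] by (simp add: phiB_qsym)
      then show ?thesis using lie by blast
    qed
  qed
qed

end
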